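(* Let $N\ge 3$ and $M\ge 2$ be integers, let $\theta\in\mathbb{R}$, and let $\mathbf{h}=[h_1,\dots,h_N]^T\in\mathbb{C}^{N}$ be such that $\mathbf{h}$ is not a scalar multiple of $\mathbf{a}(\theta)$. Let $\alpha,\beta\in\mathbb{C}$, $P>0$, $\tau\in[0,1]$, $\sigma_R>0$, $c_3\in\mathbb{C}\setminus\{0\}$, $L\ge 1$, and set $\gamma_1=P\tau$, $\gamma_2=\frac{(1-\tau)P}{N-2}$, $Q=\frac{\sigma_R^2}{2|c_3|^2L}$. With $\mathbf{A}(\theta)=\mathbf{b}(\theta)\mathbf{a}(\theta)^H$, $\dot{\mathbf{A}}(\theta)=\frac{d}{d\theta}\mathbf{A}(\theta)$ and $\mathbf{R}_x=\gamma_1\mathbf{t}_1\mathbf{t}_1^H+\gamma_2\sum_{i=3}^{N}\mathbf{t}_i\mathbf{t}_i^H$, define $$\mathrm{CRB}(\theta)=\frac{\sigma_R^2\,\mathrm{Tr}(\mathbf{A}^H\mathbf{A}\mathbf{R}_x)}{2|c_3|^2L\left(\mathrm{Tr}(\mathbf{A}^H\mathbf{A}\mathbf{R}_x)\,\mathrm{Tr}(\dot{\mathbf{A}}^H\dot{\mathbf{A}}\mathbf{R}_x)-|\mathrm{Tr}(\dot{\mathbf{A}}^H\mathbf{A}\mathbf{R}_x)|^2\right)}.$$ Then $$\mathrm{CRB}(\theta)=\frac{Q}{\gamma_1\|\mathbf{b}'\|^2N|\alpha|^2+\gamma_2M\left(\|\mathbf{a}'\|^2-\dfrac{\left(\sum_{i=1}^{N}-f_i't_i\right)^2+\left(\sum_{i=1}^{N}f_i'r_i\right)^2}{K-\frac{1}{N}(T^2+R^2)}\right)},$$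 where $\|\mathbf{b}'\|^2=\frac{\pi^2\cos^2(\theta)M(M^2-1)}{12}$ and $\|\mathbf{a}'\|^2=\frac{\pi^2\cos^2(\theta)N(N^2-1)}{12}$ are the squared norms of the derivatives of $\mathbf{b}(\theta)$ and $\mathbf{a}(\theta)$ with respect to $\theta$.
   Context: Steering vectors: $\mathbf{a}(\theta)\in\mathbb{C}^N$ has $i$-th entry $a_i=e^{-jf_i}$ with $f_i=\pi\sin(\theta)\frac{N-(2i-1)}{2}$, $i=1,\dots,N$; $\mathbf{b}(\theta)\in\mathbb{C}^M$ has $m$-th entry $e^{-j\pi\sin(\theta)\frac{M-(2m-1)}{2}}$, $m=1,\dots,M$. Here $f_i'=\frac{df_i}{d\theta}=\pi\cos(\theta)\frac{N-(2i-1)}{2}$. Define $\tilde{\mathbf{a}}=\mathbf{a}/\|\mathbf{a}\|$, $\tilde{\mathbf{h}}=\frac{\mathbf{h}-(\tilde{\mathbf{a}}^H\mathbf{h})\tilde{\mathbf{a}}}{\|\mathbf{h}-(\tilde{\mathbf{a}}^H\mathbf{h})\tilde{\mathbf{a}}\|}$, $\mathbf{t}_1=\alpha\tilde{\mathbf{a}}+\beta\tilde{\mathbf{h}}$, and let $\mathbf{t}_3,\dots,\mathbf{t}_N$ be an orthonormal basis of the orthogonal complement of $\mathrm{span}\{\tilde{\mathbf{a}},\tilde{\mathbf{h}}\}$ in $\mathbb{C}^N$. Scalar quantities (distinct from the vectors $\mathbf{t}_i$): writing $h_i=|h_i|e^{j\phi_i}$, $r_i=\mathrm{Re}(e^{jf_i}h_i)=|h_i|\cos(f_i+\phi_i)$,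 $t_i=\mathrm{Im}(e^{jf_i}h_i)=|h_i|\sin(f_i+\phi_i)$, $k_i=|h_i|^2$, $R=\sum_{i=1}^N r_i$, $T=\sum_{i=1}^N t_i$, $K=\sum_{i=1}^N k_i$. *)

theory Defs
  imports "HOL-Analysis.Analysis"
begin

text \<open>Vectors in C^n are represented as functions nat => complex, only the entries
  with index in {1..n} being relevant; matrices (M x N) as nat => nat => complex with
  row index in {1..M} and column index in {1..N}.\<close>

definition phase :: "nat \<Rightarrow> real \<Rightarrow> nat \<Rightarrow> real" where
  "phase n \<theta> i = pi * sin \<theta> * (real n - (2 * real i - 1)) / 2"

definition phase' :: "nat \<Rightarrow> real \<Rightarrow> nat \<Rightarrow> real" where
  "phase' n \<theta> i = pi * cos \<theta> * (real n - (2 * real i - 1)) / 2"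

text \<open>Steering vector with n entries: entry i is exp(-j f_i). a = steer N, b = steer M.\<close>
definition steer :: "nat \<Rightarrow> real \<Rightarrow> nat \<Rightarrow> complex" where
  "steer n \<theta> i = cis (- phase n \<theta> i)"

definition cinner :: "nat \<Rightarrow> (nat \<Rightarrow> complex) \<Rightarrow> (nat \<Rightarrow> complex) \<Rightarrow> complex" where
  "cinner n u v = (\<Sum>i=1..n. cnj (u i) * v i)"

definition vnorm :: "nat \<Rightarrow> (nat \<Rightarrow> complex) \<Rightarrow> real" where
  "vnorm n u = sqrt (\<Sum>i=1..n. (cmod (u i))\<^sup>2)"

definition atil :: "nat \<Rightarrow> real \<Rightarrow> nat \<Rightarrow> complex" where
  "atil N \<theta> i = steer N \<theta> i / of_real (vnorm N (steer N \<theta>))"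

definition hperp :: "nat \<Rightarrow> real \<Rightarrow> (nat \<Rightarrow> complex) \<Rightarrow> nat \<Rightarrow> complex" where
  "hperp N \<theta> h i = h i - cinner N (atil N \<theta>) h * atil N \<theta> i"

definition htil :: "nat \<Rightarrow> real \<Rightarrow> (nat \<Rightarrow> complex) \<Rightarrow> nat \<Rightarrow> complex" where
  "htil N \<theta> h i = hperp N \<theta> h i / of_real (vnorm N (hperp N \<theta> h))"

definition t1vec :: "nat \<Rightarrow> real \<Rightarrow> (nat \<Rightarrow> complex) \<Rightarrow> complex \<Rightarrow> complex \<Rightarrow> nat \<Rightarrow> complex" where
  "t1vec N \<theta> h \<alpha> \<beta> i = \<alpha> * atil N \<theta> i + \<beta> * htil N \<theta> h i"

definition Amat :: "nat \<Rightarrow> nat \<Rightarrow> real \<Rightarrow> nat \<Rightarrow> nat \<Rightarrow> complex" where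
  "Amat M N \<theta> m i = steer M \<theta> m * cnj (steer N \<theta> i)"

definition Adot :: "nat \<Rightarrow> nat \<Rightarrow> real \<Rightarrow> nat \<Rightarrow> nat \<Rightarrow> complex" where
  "Adot M N \<theta> m i = vector_derivative (\<lambda>s. Amat M N s m i) (at \<theta>)"

text \<open>Tr(X^H Y R) for M x N matrices X, Y and an N x N matrix R\<close>
definition trHR :: "nat \<Rightarrow> nat \<Rightarrow> (nat \<Rightarrow> nat \<Rightarrow> complex) \<Rightarrow> (nat \<Rightarrow> nat \<Rightarrow> complex)
    \<Rightarrow> (nat \<Rightarrow> nat \<Rightarrow> complex) \<Rightarrow> complex" where
  "trHR M N X Y R = (\<Sum>i=1..N. \<Sum>k=1..N. (\<Sum>m=1..M. cnj (X m i) * Y m k) * R k i)"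

definition Rx :: "nat \<Rightarrow> real \<Rightarrow> real \<Rightarrow> (nat \<Rightarrow> complex) \<Rightarrow> (nat \<Rightarrow> nat \<Rightarrow> complex)
    \<Rightarrow> nat \<Rightarrow> nat \<Rightarrow> complex" where
  "Rx N g1 g2 t1 t i k = of_real g1 * t1 i * cnj (t1 k)
      + of_real g2 * (\<Sum>l=3..N. t l i * cnj (t l k))"

definition CRB :: "nat \<Rightarrow> nat \<Rightarrow> real \<Rightarrow> real \<Rightarrow> complex \<Rightarrow> real
    \<Rightarrow> (nat \<Rightarrow> nat \<Rightarrow> complex) \<Rightarrow> complex" where
  "CRB M N \<theta> \<sigma>R c3 L R =
     (of_real (\<sigma>R\<^sup>2) * trHR M N (Amat M N \<theta>) (Amat M N \<theta>) R) /
     (of_real (2 * (cmod c3)\<^sup>2 * L) *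
       (trHR M N (Amat M N \<theta>) (Amat M N \<theta>) R * trHR M N (Adot M N \<theta>) (Adot M N \<theta>) R
        - of_real ((cmod (trHR M N (Adot M N \<theta>) (Amat M N \<theta>) R))\<^sup>2)))"

end

theory Submission
  imports Defs
begin

lemma Amat_cis: "Amat M N s m i = cis (phase N s i - phase M s m)"
  by (simp add: Amat_def steer_def cis_cnj cis_mult)

lemma phase_deriv: "((\<lambda>s. phase n s i) has_real_derivative phase' n \<theta> i) (at \<theta>)"
  unfolding phase_def phase'_def
  by (auto intro!: derivative_eq_intros)

lemma Adot_eq: "Adot M N \<theta> m i = \<i> * of_real (phase' N \<theta> i - phase' M \<theta> m) * Amat M N \<theta> m i"
proof -
  have d: "((\<lambda>s. phase N s i - phase M s m) has_real_derivative (phase' N \<theta> i - phase' M \<theta> m)) (at \<theta>)"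
    by (intro derivative_intros phase_deriv)
  have "((\<lambda>s. cis (phase N s i - phase M s m)) has_vector_derivative
     (\<i> * of_real (phase' N \<theta> i - phase' M \<theta> m) * cis (phase N \<theta> i - phase M \<theta> m))) (at \<theta>)"
    using has_derivative_cis[OF d[unfolded has_field_derivative_def]]
    by (simp add: has_vector_derivative_def scaleR_conv_of_real mult_ac)
  then show ?thesis unfolding Adot_def Amat_cis by (rule vector_derivative_at)
qed

lemma sum_lin: "(\<Sum>m=1..n. (c - 2 * real m)) = real n * c - real n * (real n + 1)"
  by (induction n) (auto simp: algebra_simps)

lemma sum_sq: "(\<Sum>m=1..n. (c - 2 * real m)^2) = real n * c^2 - 2 * c * real n * (real n + 1)
   + 2 * real n * (real n + 1) * (2 * real n + 1) / 3"
proof (induction n)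
  case 0 then show ?case by simp
next
  case (Suc n)
  have "(\<Sum>m=1..Suc n. (c - 2 * real m)^2) = (\<Sum>m=1..n. (c - 2 * real m)^2) + (c - 2 * real (Suc n))^2"
    by simp
  also have "\<dots> = real n * c^2 - 2 * c * real n * (real n + 1)
   + 2 * real n * (real n + 1) * (2 * real n + 1) / 3 + (c - 2 * real (Suc n))^2"
    by (simp only: Suc.IH)
  also have "\<dots> = real (Suc n) * c^2 - 2 * c * real (Suc n) * (real (Suc n) + 1)
   + 2 * real (Suc n) * (real (Suc n) + 1) * (2 * real (Suc n) + 1) / 3"
    by (simp add: algebra_simps power2_eq_square add_divide_distrib)
  finally show ?case .
qed

lemma phase'_alt: "phase' n \<theta> m = pi * cos \<theta> / 2 * (real n + 1 - 2 * real m)"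
  unfolding phase'_def by (simp add: field_simps)

lemma phase'_sum: "(\<Sum>m=1..n. phase' n \<theta> m) = 0"
proof -
  have "(\<Sum>m=1..n. phase' n \<theta> m) = pi * cos \<theta> / 2 * (\<Sum>m=1..n. (real n + 1 - 2 * real m))"
    by (simp add: phase'_alt sum_distrib_left)
  also have "\<dots> = 0" by (simp only: sum_lin) (simp add: algebra_simps)
  finally show ?thesis .
qed

lemma phase'_sumsq: "(\<Sum>m=1..n. (phase' n \<theta> m)^2) = pi^2 * (cos \<theta>)^2 * real n * ((real n)^2 - 1) / 12"
proof -
  have "(\<Sum>m=1..n. (phase' n \<theta> m)^2) = (pi * cos \<theta> / 2)^2 * (\<Sum>m=1..n. (real n + 1 - 2 * real m)^2)"
    by (simp only: phase'_alt sum_distrib_left power_mult_distrib)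
  also have "\<dots> = pi^2 * (cos \<theta>)^2 * real n * ((real n)^2 - 1) / 12"
    by (simp only: sum_sq) (simp add: algebra_simps power2_eq_square power_divide)
  finally show ?thesis .
qed

definition Sf :: "nat \<Rightarrow> real \<Rightarrow> (nat \<Rightarrow> nat \<Rightarrow> complex) \<Rightarrow> (nat \<Rightarrow> real) \<Rightarrow> (nat \<Rightarrow> real) \<Rightarrow> complex" where
  "Sf N \<theta> R u v = (\<Sum>i=1..N. \<Sum>k=1..N. of_real (u i) * of_real (v k) * cis (phase N \<theta> k - phase N \<theta> i) * R k i)"

lemma AA: "cnj (Amat M N \<theta> m i) * Amat M N \<theta> m k = cis (phase N \<theta> k - phase N \<theta> i)"
proof -
  have "cnj (Amat M N \<theta> m i) * Amat M N \<theta> m k = cis (- (phase N \<theta> i - phase M \<theta> m) + (phase N \<theta> k - phase M \<theta> m))"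
    by (simp add: Amat_cis cis_cnj cis_mult)
  also have "- (phase N \<theta> i - phase M \<theta> m) + (phase N \<theta> k - phase M \<theta> m) = phase N \<theta> k - phase N \<theta> i" by simp
  finally show ?thesis .
qed

lemma tr1: "trHR M N (Amat M N \<theta>) (Amat M N \<theta>) R = of_nat M * Sf N \<theta> R (\<lambda>_. 1) (\<lambda>_. 1)"
  unfolding trHR_def Sf_def AA by (simp add: sum_distrib_left mult_ac)

lemma tr2: "trHR M N (Adot M N \<theta>) (Adot M N \<theta>) R = of_nat M * Sf N \<theta> R (phase' N \<theta>) (phase' N \<theta>)
   + of_real (pi^2 * (cos \<theta>)^2 * real M * ((real M)^2 - 1) / 12) * Sf N \<theta> R (\<lambda>_. 1) (\<lambda>_. 1)"
proof -
  let ?w = "phase' N \<theta>" and ?v = "phase' M \<theta>"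
  have inner: "(\<Sum>m=1..M. cnj (Adot M N \<theta> m i) * Adot M N \<theta> m k)
     = (of_nat M * of_real (?w i) * of_real (?w k) + of_real (pi^2 * (cos \<theta>)^2 * real M * ((real M)^2 - 1) / 12))
        * cis (phase N \<theta> k - phase N \<theta> i)" for i k
  proof -
    have "(\<Sum>m=1..M. cnj (Adot M N \<theta> m i) * Adot M N \<theta> m k)
       = (\<Sum>m=1..M. of_real ((?w i - ?v m) * (?w k - ?v m)) * cis (phase N \<theta> k - phase N \<theta> i))"
    proof (rule sum.cong[OF refl])
      fix m
      have "cnj (Adot M N \<theta> m i) * Adot M N \<theta> m k = (cnj \<i> * \<i>) * (of_real (?w i - ?v m) * of_real (?w k - ?v m)) * (cnj (Amat M N \<theta> m i) * Amat M N \<theta> m k)"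
        by (simp add: Adot_eq mult_ac)
      also have "\<dots> = of_real ((?w i - ?v m) * (?w k - ?v m)) * cis (phase N \<theta> k - phase N \<theta> i)"
        by (simp add: AA)
      finally show "cnj (Adot M N \<theta> m i) * Adot M N \<theta> m k = of_real ((?w i - ?v m) * (?w k - ?v m)) * cis (phase N \<theta> k - phase N \<theta> i)" .
    qed
    also have "\<dots> = of_real (\<Sum>m=1..M. (?w i - ?v m) * (?w k - ?v m)) * cis (phase N \<theta> k - phase N \<theta> i)"
      by (simp add: sum_distrib_right)
    also have "(\<Sum>m=1..M. (?w i - ?v m) * (?w k - ?v m)) = real M * ?w i * ?w k - (?w i + ?w k) * (\<Sum>m=1..M. ?v m) + (\<Sum>m=1..M. (?v m)^2)"
      by (simp add: algebra_simps power2_eq_square sum.distrib sum_subtractf sum_distrib_left)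
    also have "\<dots> = real M * ?w i * ?w k + pi^2 * (cos \<theta>)^2 * real M * ((real M)^2 - 1) / 12"
      unfolding phase'_sum phase'_sumsq by simp
    finally show ?thesis by simp
  qed
  have gen: "(\<Sum>i=1..N. \<Sum>k=1..N. ((of_nat M * of_real (?w i) * of_real (?w k) + of_real C)
        * cis (phase N \<theta> k - phase N \<theta> i)) * R k i)
      = of_nat M * Sf N \<theta> R ?w ?w + of_real C * Sf N \<theta> R (\<lambda>_. 1) (\<lambda>_. 1)" for C
    unfolding Sf_def by (simp add: sum_distrib_left sum.distrib ring_distribs mult_ac)
  show ?thesis
    unfolding trHR_def inner by (rule gen)
qed

lemma tr3: "trHR M N (Adot M N \<theta>) (Amat M N \<theta>) R = - \<i> * of_nat M * Sf N \<theta> R (phase' N \<theta>) (\<lambda>_. 1)"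
proof -
  let ?w = "phase' N \<theta>" and ?v = "phase' M \<theta>"
  have inner: "(\<Sum>m=1..M. cnj (Adot M N \<theta> m i) * Amat M N \<theta> m k)
     = - \<i> * of_nat M * of_real (?w i) * cis (phase N \<theta> k - phase N \<theta> i)" for i k
  proof -
    have "(\<Sum>m=1..M. cnj (Adot M N \<theta> m i) * Amat M N \<theta> m k)
       = (\<Sum>m=1..M. - \<i> * of_real (?w i - ?v m) * cis (phase N \<theta> k - phase N \<theta> i))"
    proof (rule sum.cong[OF refl])
      fix m
      have "cnj (Adot M N \<theta> m i) * Amat M N \<theta> m k = cnj \<i> * of_real (?w i - ?v m) * (cnj (Amat M N \<theta> m i) * Amat M N \<theta> m k)"
        by (simp add: Adot_eq mult_ac)
      also have "\<dots> = - \<i> * of_real (?w i - ?v m) * cis (phase N \<theta> k - phase N \<theta> i)"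
        by (simp add: AA)
      finally show "cnj (Adot M N \<theta> m i) * Amat M N \<theta> m k = - \<i> * of_real (?w i - ?v m) * cis (phase N \<theta> k - phase N \<theta> i)" .
    qed
    also have "\<dots> = - \<i> * of_real (\<Sum>m=1..M. (?w i - ?v m)) * cis (phase N \<theta> k - phase N \<theta> i)"
      by (simp add: sum_distrib_right sum_distrib_left)
    also have "(\<Sum>m=1..M. (?w i - ?v m)) = real M * ?w i"
      unfolding sum_subtractf phase'_sum by simp
    finally show ?thesis by simp
  qed
  show ?thesis
    unfolding trHR_def inner Sf_def by (simp add: sum_distrib_left algebra_simps)
qed

definition zv :: "nat \<Rightarrow> real \<Rightarrow> (nat \<Rightarrow> real) \<Rightarrow> nat \<Rightarrow> complex" where
  "zv N \<theta> u i = of_real (u i) * steer N \<theta> i"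

lemma H_eq: "(\<Sum>i=1..N. \<Sum>k=1..N. of_real (u i) * of_real (v k) * cis (phase N \<theta> k - phase N \<theta> i) * (y k * cnj (y i)))
   = cinner N (zv N \<theta> v) y * cnj (cinner N (zv N \<theta> u) y)"
proof -
  have "cinner N (zv N \<theta> v) y * cnj (cinner N (zv N \<theta> u) y)
     = (\<Sum>k=1..N. of_real (v k) * cis (phase N \<theta> k) * y k) * (\<Sum>i=1..N. of_real (u i) * cis (- phase N \<theta> i) * cnj (y i))"
    by (simp add: cinner_def zv_def steer_def cnj_sum cis_cnj)
  also have "\<dots> = (\<Sum>k=1..N. \<Sum>i=1..N. (of_real (v k) * cis (phase N \<theta> k) * y k) * (of_real (u i) * cis (- phase N \<theta> i) * cnj (y i)))"
    by (rule sum_product)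
  also have "\<dots> = (\<Sum>i=1..N. \<Sum>k=1..N. (of_real (v k) * cis (phase N \<theta> k) * y k) * (of_real (u i) * cis (- phase N \<theta> i) * cnj (y i)))"
    by (rule sum.swap)
  also have "\<dots> = (\<Sum>i=1..N. \<Sum>k=1..N. of_real (u i) * of_real (v k) * cis (phase N \<theta> k - phase N \<theta> i) * (y k * cnj (y i)))"
  proof -
    have "cis (phase N \<theta> k - phase N \<theta> i) = cis (phase N \<theta> k) * cis (- phase N \<theta> i)" for i k
      by (simp add: cis_mult)
    then show ?thesis by (simp add: mult_ac)
  qed
  finally show ?thesis ..
qed

lemma Sf_Rx: "Sf N \<theta> (Rx N g1 g2 t1 t) u v
   = of_real g1 * (cinner N (zv N \<theta> v) t1 * cnj (cinner N (zv N \<theta> u) t1))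
     + of_real g2 * (\<Sum>l=3..N. cinner N (zv N \<theta> v) (t l) * cnj (cinner N (zv N \<theta> u) (t l)))"
proof -
  let ?c = "\<lambda>i k. of_real (u i) * of_real (v k) * cis (phase N \<theta> k - phase N \<theta> i)"
  have "Sf N \<theta> (Rx N g1 g2 t1 t) u v = (\<Sum>i=1..N. \<Sum>k=1..N.
       of_real g1 * (?c i k * (t1 k * cnj (t1 i))) + of_real g2 * (\<Sum>l=3..N. ?c i k * (t l k * cnj (t l i))))"
    unfolding Sf_def Rx_def by (simp add: ring_distribs sum_distrib_left mult_ac)
  also have "\<dots> = of_real g1 * (\<Sum>i=1..N. \<Sum>k=1..N. ?c i k * (t1 k * cnj (t1 i)))
      + of_real g2 * (\<Sum>i=1..N. \<Sum>k=1..N. \<Sum>l=3..N. ?c i k * (t l k * cnj (t l i)))"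
    by (simp add: sum.distrib sum_distrib_left)
  also have "(\<Sum>i=1..N. \<Sum>k=1..N. \<Sum>l=3..N. ?c i k * (t l k * cnj (t l i)))
      = (\<Sum>l=3..N. \<Sum>i=1..N. \<Sum>k=1..N. ?c i k * (t l k * cnj (t l i)))"
    by (simp add: sum.swap[of _ "{3..N}"])
  finally show ?thesis by (simp only: H_eq)
qed

lemma cinner_conj: "cinner n y x = cnj (cinner n x y)"
  by (simp add: cinner_def cnj_sum mult.commute)

lemma cinner_lin2: "cinner n x (\<lambda>i. c * y i + e * z i) = c * cinner n x y + e * cinner n x z"
  by (simp add: cinner_def ring_distribs sum.distrib sum_distrib_left mult_ac)

lemma cinner_diff2: "cinner n x (\<lambda>i. y i - e * z i) = cinner n x y - e * cinner n x z"
  by (simp add: cinner_def ring_distribs sum_subtractf sum_distrib_left mult_ac)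

lemma cinner_diff1: "cinner n (\<lambda>i. y i - e * z i) x = cinner n y x - cnj e * cinner n z x"
  by (simp add: cinner_def ring_distribs sum_subtractf sum_distrib_left mult_ac)

lemma cinner_div2: "cinner n x (\<lambda>i. y i / of_real r) = cinner n x y / of_real r"
  by (simp add: cinner_def sum_divide_distrib)

lemma cinner_div1: "cinner n (\<lambda>i. y i / of_real r) x = cinner n y x / of_real r"
  by (simp add: cinner_def sum_divide_distrib)

lemma cinner_self: "cinner n x x = of_real ((vnorm n x)^2)"
proof -
  have "cinner n x x = (\<Sum>i=1..n. of_real ((cmod (x i))^2))"
    unfolding cinner_def by (rule sum.cong) (auto simp: complex_norm_square[symmetric] mult.commute)
  also have "\<dots> = of_real (\<Sum>i=1..n. (cmod (x i))^2)" by simp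
  also have "(\<Sum>i=1..n. (cmod (x i))^2) = (vnorm n x)^2"
    unfolding vnorm_def by (simp add: sum_nonneg)
  finally show ?thesis .
qed

lemma vnorm_steer: "vnorm n (steer n \<theta>) = sqrt (real n)"
  by (simp add: vnorm_def steer_def)

lemma cinner_steer_self: "cinner n (steer n \<theta>) (steer n \<theta>) = of_nat n"
  by (simp add: cinner_self vnorm_steer)

theorem lemma1:
  fixes N M :: nat and \<theta> P \<tau> \<sigma>R L :: real and \<alpha> \<beta> c3 :: complex
    and h :: "nat \<Rightarrow> complex" and t :: "nat \<Rightarrow> nat \<Rightarrow> complex"
  assumes N3: "N \<ge> 3" and M2: "M \<ge> 2"
    and h_not_par: "\<not> (\<exists>c. \<forall>i\<in>{1..N}. h i = c * steer N \<theta> i)"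
    and P: "P > 0" and tau: "0 \<le> \<tau>" "\<tau> \<le> 1" and sig: "\<sigma>R > 0"
    and c3: "c3 \<noteq> 0" and L: "L \<ge> 1"
    and t_orthonormal: "\<forall>l\<in>{3..N}. \<forall>l'\<in>{3..N}.
        cinner N (t l) (t l') = (if l = l' then 1 else 0)"
    and t_perp_a: "\<forall>l\<in>{3..N}. cinner N (atil N \<theta>) (t l) = 0"
    and t_perp_h: "\<forall>l\<in>{3..N}. cinner N (htil N \<theta> h) (t l) = 0"
    and t_spans: "\<forall>v. cinner N (atil N \<theta>) v = 0 \<and> cinner N (htil N \<theta> h) v = 0
        \<longrightarrow> (\<forall>i\<in>{1..N}. v i = (\<Sum>l=3..N. cinner N (t l) v * t l i))"
    and well_defined:
      "(let Rx' = Rx N (P * \<tau>) ((1 - \<tau>) * P / (real N - 2)) (t1vec N \<theta> h \<alpha> \<beta>) t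
        in trHR M N (Amat M N \<theta>) (Amat M N \<theta>) Rx' * trHR M N (Adot M N \<theta>) (Adot M N \<theta>) Rx'
           - of_real ((cmod (trHR M N (Adot M N \<theta>) (Amat M N \<theta>) Rx'))\<^sup>2)) \<noteq> 0"
  shows "CRB M N \<theta> \<sigma>R c3 L (Rx N (P * \<tau>) ((1 - \<tau>) * P / (real N - 2)) (t1vec N \<theta> h \<alpha> \<beta>) t)
       = of_real (
          let g1 = P * \<tau>; g2 = (1 - \<tau>) * P / (real N - 2);
              Q = \<sigma>R\<^sup>2 / (2 * (cmod c3)\<^sup>2 * L);
              nb2 = pi\<^sup>2 * (cos \<theta>)\<^sup>2 * real M * ((real M)\<^sup>2 - 1) / 12;
              na2 = pi\<^sup>2 * (cos \<theta>)\<^sup>2 * real N * ((real N)\<^sup>2 - 1) / 12;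
              r = (\<lambda>i. Re (cis (phase N \<theta> i) * h i));
              ti = (\<lambda>i. Im (cis (phase N \<theta> i) * h i));
              k = (\<lambda>i. (cmod (h i))\<^sup>2);
              R = (\<Sum>i=1..N. r i); T = (\<Sum>i=1..N. ti i); K = (\<Sum>i=1..N. k i)
          in Q / (g1 * nb2 * real N * (cmod \<alpha>)\<^sup>2
                  + g2 * real M * (na2 -
                     ((\<Sum>i=1..N. - phase' N \<theta> i * ti i)\<^sup>2 + (\<Sum>i=1..N. phase' N \<theta> i * r i)\<^sup>2)
                     / (K - (T\<^sup>2 + R\<^sup>2) / real N))))"
proof -
  define a where "a = steer N \<theta>"
  define s where "s = sqrt (real N)"
  define w where "w = phase' N \<theta>"
  define d where "d = zv N \<theta> w"
  define g1 where "g1 = P * \<tau>"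
  define g2 where "g2 = (1 - \<tau>) * P / (real N - 2)"
  define t1 where "t1 = t1vec N \<theta> h \<alpha> \<beta>"
  define Rm where "Rm = Rx N g1 g2 t1 t"
  define aa where "aa = atil N \<theta>"
  define hp where "hp = hperp N \<theta> h"
  define nh where "nh = vnorm N hp"
  define ht where "ht = htil N \<theta> h"
  have Npos: "real N > 0" using N3 by simp
  have spos: "s > 0" using Npos s_def by simp
  have s2: "s * s = real N" using Npos s_def by simp
  have zv1: "zv N \<theta> (\<lambda>_. 1) = a" by (simp add: zv_def a_def fun_eq_iff)
  have aa_eq: "aa = (\<lambda>i. a i / of_real s)"
    by (simp add: aa_def atil_def a_def s_def vnorm_steer fun_eq_iff)
  have a_eq: "a = (\<lambda>i. of_real s * aa i)"
    using spos by (simp add: aa_eq fun_eq_iff)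
  have c_aa_at: "cinner N aa aa = 1"
  proof -
    have "cinner N aa aa = of_nat N / of_real s / of_real s"
      unfolding aa_eq cinner_div1 cinner_div2 a_def cinner_steer_self ..
    also have "\<dots> = 1" using s2 spos
      by (simp add: field_simps) (metis of_real_mult of_real_of_nat_eq)
    finally show ?thesis .
  qed
  have hp_eq: "hp = (\<lambda>i. h i - cinner N aa h * aa i)"
    by (simp add: hp_def hperp_def aa_def fun_eq_iff)
  have c_aa_hp: "cinner N aa hp = 0"
    unfolding hp_eq cinner_diff2 c_aa_at by simp
  have nh_pos: "nh > 0"
  proof (rule ccontr)
    assume "\<not> nh > 0"
    then have "nh = 0" using nh_def vnorm_def by (metis real_sqrt_ge_zero sum_nonneg zero_le_power2 order_less_le)
    then have "(\<Sum>i=1..N. (cmod (hp i))^2) = 0" by (simp add: nh_def vnorm_def)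
    then have "\<forall>i\<in>{1..N}. (cmod (hp i))^2 = 0" by (subst (asm) sum_nonneg_eq_0_iff) auto
    then have "\<forall>i\<in>{1..N}. h i = (cinner N aa h / of_real s) * steer N \<theta> i"
      by (auto simp: hp_eq aa_eq a_def)
    then show False using h_not_par by blast
  qed
  have ht_eq: "ht = (\<lambda>i. hp i / of_real nh)"
    by (simp add: ht_def htil_def hp_def nh_def fun_eq_iff)
  have c_ht_ht: "cinner N ht ht = 1"
  proof -
    have "cinner N ht ht = of_real (nh^2) / of_real nh / of_real nh"
      unfolding ht_eq cinner_div1 cinner_div2 cinner_self nh_def ..
    also have "\<dots> = 1" using nh_pos by (simp add: field_simps power2_eq_square)
    finally show ?thesis .
  qed
  have c_aa_ht: "cinner N aa ht = 0"
    unfolding ht_eq cinner_div2 c_aa_hp by simp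
  have c_ht_aa: "cinner N ht aa = 0"
    by (subst cinner_conj) (simp add: c_aa_ht)
  have t1_eq: "t1 = (\<lambda>i. \<alpha> * aa i + \<beta> * ht i)"
    by (simp add: t1_def t1vec_def aa_def ht_def fun_eq_iff)
  have cinner_scale1: "\<And>x. cinner N a x = of_real s * cinner N aa x"
    unfolding a_eq by (simp add: cinner_def sum_distrib_left mult_ac)
  have c_a_t1: "cinner N a t1 = \<alpha> * of_real s"
    unfolding cinner_scale1 t1_eq cinner_lin2 c_aa_at c_aa_ht by simp
  have c_a_tl: "\<forall>l\<in>{3..N}. cinner N a (t l) = 0"
    using t_perp_a by (simp add: cinner_scale1 aa_def)
  have c_d_a: "cinner N d a = 0"
  proof -
    have "cinner N d a = (\<Sum>i=1..N. of_real (w i))"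
      unfolding cinner_def d_def zv_def a_def
      by (rule sum.cong) (auto simp: steer_def cis_cnj cis_mult)
    also have "\<dots> = 0" unfolding w_def of_real_sum[symmetric] phase'_sum by simp
    finally show ?thesis .
  qed
  have c_d_aa: "cinner N d aa = 0"
    unfolding aa_eq cinner_div2 c_d_a by simp
  define c where "c = cinner N d ht"
  have c_d_t1: "cinner N d t1 = \<beta> * c"
    unfolding t1_eq cinner_lin2 c_d_aa c_def by simp
  define e where "e = cinner N ht d"
  have e_c: "e = cnj c" unfolding e_def c_def by (rule cinner_conj)
  define v where "v = (\<lambda>i. d i - e * ht i)"
  have c_aa_d: "cinner N aa d = 0" by (subst cinner_conj) (simp add: c_d_aa)
  have v1: "cinner N (atil N \<theta>) v = 0" unfolding aa_def[symmetric] v_def cinner_diff2 c_aa_d c_aa_ht by simp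
  have v2: "cinner N (htil N \<theta> h) v = 0" unfolding ht_def[symmetric] v_def cinner_diff2 c_ht_ht e_def by simp
  have vexp: "\<forall>i\<in>{1..N}. v i = (\<Sum>l=3..N. cinner N (t l) v * t l i)"
    using t_spans v1 v2 by blast
  have c_tl_v: "cinner N (t l) v = cinner N (t l) d" if "l \<in> {3..N}" for l
  proof -
    have "cinner N (t l) ht = 0" using t_perp_h that by (subst cinner_conj) (simp add: ht_def)
    then show ?thesis unfolding v_def cinner_diff2 by simp
  qed
  have vv1: "cinner N v v = (\<Sum>l=3..N. cinner N (t l) v * cinner N v (t l))"
  proof -
    have swap: "(\<Sum>i=1..N. cnj (v i) * (\<Sum>l=3..N. cc l * t l i)) = (\<Sum>l=3..N. cc l * cinner N v (t l))" for cc
      unfolding cinner_def by (simp add: sum_distrib_left mult_ac sum.swap[of _ "{3..N}"])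
    have "cinner N v v = (\<Sum>i=1..N. cnj (v i) * v i)" by (simp add: cinner_def)
    also have "\<dots> = (\<Sum>i=1..N. cnj (v i) * (\<Sum>l=3..N. cinner N (t l) v * t l i))"
    proof (rule sum.cong[OF refl])
      fix i assume "i \<in> {1..N}"
      then have "v i = (\<Sum>l=3..N. cinner N (t l) v * t l i)" using vexp by blast
      then show "cnj (v i) * v i = cnj (v i) * (\<Sum>l=3..N. cinner N (t l) v * t l i)" by (rule arg_cong)
    qed
    also have "\<dots> = (\<Sum>l=3..N. cinner N (t l) v * cinner N v (t l))" by (rule swap)
    finally show ?thesis .
  qed
  have vv2: "cinner N v v = cinner N d d - cnj e * e"
  proof -
    have "cinner N v v = cinner N v (\<lambda>i. d i - e * ht i)" by (simp add: v_def)
    also have "\<dots> = cinner N v d - e * cinner N v ht" by (rule cinner_diff2)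
    also have "cinner N v ht = 0" using v2 by (subst cinner_conj) (simp add: ht_def)
    also have "cinner N v d = cinner N d d - cnj e * cinner N ht d" unfolding v_def cinner_diff1 ..
    finally show ?thesis by (simp add: e_def)
  qed
  define Sl where "Sl = (\<Sum>l=3..N. cinner N d (t l) * cnj (cinner N d (t l)))"
  have Sl_eq: "Sl = cinner N d d - cnj e * e"
  proof -
    have "Sl = (\<Sum>l=3..N. cinner N (t l) v * cinner N v (t l))"
      unfolding Sl_def
    proof (rule sum.cong[OF refl])
      fix l assume l: "l \<in> {3..N}"
      have "cinner N v (t l) = cnj (cinner N (t l) v)" by (rule cinner_conj)
      then show "cinner N d (t l) * cnj (cinner N d (t l)) = cinner N (t l) v * cinner N v (t l)"
        using c_tl_v[OF l] cinner_conj[of N d "t l"] by (simp add: mult.commute)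
    qed
    then show ?thesis using vv1 vv2 by simp
  qed
  define na2 where "na2 = pi\<^sup>2 * (cos \<theta>)\<^sup>2 * real N * ((real N)\<^sup>2 - 1) / 12"
  define nb2 where "nb2 = pi\<^sup>2 * (cos \<theta>)\<^sup>2 * real M * ((real M)\<^sup>2 - 1) / 12"
  have c_d_d: "cinner N d d = of_real na2"
  proof -
    have "cinner N d d = (\<Sum>i=1..N. of_real ((w i)^2))"
      unfolding cinner_def d_def zv_def
      by (rule sum.cong) (auto simp: steer_def cis_cnj cis_mult power2_eq_square)
    also have "\<dots> = of_real na2" unfolding of_real_sum[symmetric] w_def phase'_sumsq na2_def ..
    finally show ?thesis .
  qed
  have Sl_real: "Sl = of_real (na2 - (cmod c)^2)"
    unfolding Sl_eq c_d_d e_c using complex_norm_square[of c] by (simp add: mult.commute)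
  define ch where "ch = cinner N a h"
  define cdh where "cdh = cinner N d h"
  have c_eq: "c = cdh / of_real nh"
  proof -
    have "cinner N d hp = cdh" unfolding hp_eq cinner_diff2 c_d_aa cdh_def by simp
    then show ?thesis unfolding c_def ht_eq cinner_div2 by simp
  qed
  define K' where "K' = (\<Sum>i=1..N. (cmod (h i))^2)"
  have caah: "cinner N aa h = ch / of_real s" unfolding aa_eq cinner_div1 ch_def ..
  have nh2: "nh^2 = K' - (cmod ch)^2 / real N"
  proof -
    have hh: "cinner N h h = of_real K'"
      unfolding cinner_self vnorm_def K'_def by (simp add: sum_nonneg)
    have "of_real (nh^2) = cinner N hp hp" unfolding nh_def cinner_self ..
    also have "\<dots> = cinner N hp (\<lambda>i. h i - cinner N aa h * aa i)" by (simp add: hp_eq)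
    also have "\<dots> = cinner N hp h - cinner N aa h * cinner N hp aa" by (rule cinner_diff2)
    also have "cinner N hp aa = 0" by (subst cinner_conj) (simp add: c_aa_hp)
    also have "cinner N hp h = cinner N h h - cnj (cinner N aa h) * cinner N aa h"
      unfolding hp_eq cinner_diff1 ..
    also have "cnj (cinner N aa h) * cinner N aa h = of_real ((cmod ch)^2 / real N)"
    proof -
      have "cnj (cinner N aa h) * cinner N aa h = (cnj ch * ch) / (of_real s * of_real s)"
        unfolding caah by simp
      also have "cnj ch * ch = of_real ((cmod ch)^2)" using complex_norm_square[of ch] by (simp add: mult.commute)
      also have "of_real s * of_real s = (of_real (real N) :: complex)" using s2 by (metis of_real_mult)
      finally show ?thesis by simp
    qed
    finally have "of_real (nh^2) = (of_real (K' - (cmod ch)^2 / real N) :: complex)" unfolding hh by simp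
    then show ?thesis using of_real_eq_iff by blast
  qed
  have cmodc: "(cmod c)^2 = (cmod cdh)^2 / nh^2"
    unfolding c_eq using nh_pos by (simp add: norm_divide power_divide)
  have ch_Re: "Re ch = (\<Sum>i=1..N. Re (cis (phase N \<theta> i) * h i))"
    unfolding ch_def cinner_def a_def Re_sum by (simp add: steer_def cis_cnj)
  have ch_Im: "Im ch = (\<Sum>i=1..N. Im (cis (phase N \<theta> i) * h i))"
    unfolding ch_def cinner_def a_def Im_sum by (simp add: steer_def cis_cnj)
  have cdh_Re: "Re cdh = (\<Sum>i=1..N. phase' N \<theta> i * Re (cis (phase N \<theta> i) * h i))"
    unfolding cdh_def cinner_def d_def zv_def Re_sum w_def by (simp add: steer_def cis_cnj mult.assoc)
  have cdh_Im: "Im cdh = (\<Sum>i=1..N. phase' N \<theta> i * Im (cis (phase N \<theta> i) * h i))"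
    unfolding cdh_def cinner_def d_def zv_def Im_sum w_def by (simp add: steer_def cis_cnj mult.assoc)
  define x where "x = g1 * real N * (cmod \<alpha>)^2"
  define cb where "cb = (cmod \<beta>)^2 * (cmod c)^2"
  have zvw: "zv N \<theta> w = d" by (simp add: d_def)
  have sumz: "(\<Sum>l=3..N. cinner N a (t l) * cnj (cinner N y (t l))) = 0" for y
    using c_a_tl by simp
  have aa_abs: "\<alpha> * of_real s * cnj (\<alpha> * of_real s) = of_real ((cmod \<alpha>)^2 * real N)"
  proof -
    have "\<alpha> * of_real s * cnj (\<alpha> * of_real s) = (\<alpha> * cnj \<alpha>) * of_real (s * s)" by simp
    also have "\<alpha> * cnj \<alpha> = of_real ((cmod \<alpha>)^2)" by (rule complex_norm_square[symmetric])
    finally show ?thesis using s2 by simp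
  qed
  have bc_abs: "\<beta> * c * cnj (\<beta> * c) = of_real cb"
    unfolding cb_def using complex_norm_square[of "\<beta> * c"] by (simp add: norm_mult power_mult_distrib)
  have T1: "trHR M N (Amat M N \<theta>) (Amat M N \<theta>) Rm = of_real (real M * x)"
    unfolding tr1 Rm_def Sf_Rx zv1 c_a_t1 sumz aa_abs x_def by simp
  have T2: "trHR M N (Adot M N \<theta>) (Adot M N \<theta>) Rm = of_real (real M * (g1 * cb + g2 * (na2 - (cmod c)^2)) + nb2 * x)"
  proof -
    have "trHR M N (Adot M N \<theta>) (Adot M N \<theta>) Rm = of_nat M * (of_real g1 * (\<beta> * c * cnj (\<beta> * c)) + of_real g2 * Sl)
       + of_real nb2 * (of_real g1 * (\<alpha> * of_real s * cnj (\<alpha> * of_real s)) + of_real g2 * 0)"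
      unfolding tr2 w_def[symmetric] Rm_def Sf_Rx zv1 zvw c_a_t1 c_d_t1 sumz Sl_def nb2_def by simp
    also have "\<dots> = of_real (real M * (g1 * cb + g2 * (na2 - (cmod c)^2)) + nb2 * x)"
      unfolding bc_abs aa_abs Sl_real x_def by simp
    finally show ?thesis .
  qed
  have T3: "(cmod (trHR M N (Adot M N \<theta>) (Amat M N \<theta>) Rm))^2 = (real M)^2 * x * g1 * cb"
  proof -
    have "trHR M N (Adot M N \<theta>) (Amat M N \<theta>) Rm = - \<i> * of_nat M * (of_real g1 * (\<alpha> * of_real s * cnj (\<beta> * c)))"
      unfolding tr3 w_def[symmetric] Rm_def Sf_Rx zv1 zvw c_a_t1 c_d_t1 sumz by simp
    then have "cmod (trHR M N (Adot M N \<theta>) (Amat M N \<theta>) Rm) = real M * \<bar>g1\<bar> * cmod \<alpha> * s * (cmod \<beta> * cmod c)"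
      using spos by (simp add: norm_mult)
    then show ?thesis unfolding x_def cb_def using s2
      by (simp add: power_mult_distrib power2_eq_square algebra_simps)
  qed
  define X1 where "X1 = real M * x"
  define X2 where "X2 = real M * (g1 * cb + g2 * (na2 - (cmod c)^2)) + nb2 * x"
  define X3 where "X3 = (real M)^2 * x * g1 * cb"
  define Dn where "Dn = nb2 * x + g2 * real M * (na2 - (cmod c)^2)"
  have WD: "(of_real X1 * of_real X2 - of_real X3 :: complex) \<noteq> 0"
    using well_defined unfolding Let_def g1_def[symmetric] g2_def[symmetric] t1_def[symmetric]
      Rm_def[symmetric] T1 T2 T3 X1_def X2_def X3_def .
  have Dfac: "X1 * X2 - X3 = X1 * Dn"
    unfolding X1_def X2_def X3_def Dn_def by (simp add: algebra_simps power2_eq_square)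
  have X1nz: "X1 \<noteq> 0" and Dnnz: "Dn \<noteq> 0"
    using WD Dfac by (auto simp flip: of_real_mult of_real_diff)
  have LHS: "CRB M N \<theta> \<sigma>R c3 L Rm = of_real (\<sigma>R^2 / (2 * (cmod c3)^2 * L) / Dn)"
  proof -
    have "CRB M N \<theta> \<sigma>R c3 L Rm = of_real (\<sigma>R^2 * X1 / (2 * (cmod c3)^2 * L * (X1 * X2 - X3)))"
      unfolding CRB_def T1 T2 T3 X1_def[symmetric] X2_def[symmetric] X3_def[symmetric]
      by (simp only: of_real_mult of_real_diff of_real_divide)
    also have "\<sigma>R^2 * X1 / (2 * (cmod c3)^2 * L * (X1 * X2 - X3)) = \<sigma>R^2 / (2 * (cmod c3)^2 * L) / Dn"
      unfolding Dfac using X1nz by (simp add: field_simps)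
    finally show ?thesis .
  qed
  have num: "(\<Sum>i=1..N. - phase' N \<theta> i * Im (cis (phase N \<theta> i) * h i))\<^sup>2
      + (\<Sum>i=1..N. phase' N \<theta> i * Re (cis (phase N \<theta> i) * h i))\<^sup>2 = (cmod cdh)^2"
    unfolding cmod_power2 cdh_Re cdh_Im by (simp add: sum_negf)
  have den: "(\<Sum>i=1..N. (cmod (h i))^2) - ((\<Sum>i=1..N. Im (cis (phase N \<theta> i) * h i))\<^sup>2
       + (\<Sum>i=1..N. Re (cis (phase N \<theta> i) * h i))\<^sup>2) / real N = nh^2"
    unfolding nh2 K'_def cmod_power2 ch_Re ch_Im by simp
  have ratio: "(cmod cdh)^2 / nh^2 = (cmod c)^2" using cmodc by simp
  show ?thesis
    unfolding t1_def[symmetric] g1_def[symmetric] g2_def[symmetric] Rm_def[symmetric] LHS Let_def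
      num den ratio na2_def[symmetric] nb2_def[symmetric]
    unfolding Dn_def x_def by (simp add: algebra_simps)
qed

end
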